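(* Let $R_1,R_2$ be i.i.d. nonnegative random variables with pdf $f_R$, and $\Theta_1,\Theta_2$ i.i.d. uniform on $[0,2\pi)$, independent of the $R_i$. Let $S_2=R_1+R_2$ and $Z_2=\sqrt{(R_1\cos\Theta_1+R_2\cos\Theta_2)^2+(R_1\sin\Theta_1+R_2\sin\Theta_2)^2}$. Then the joint pdf of $(S_2,Z_2)$ is $$f_{S_2,Z_2}(s,z)=\frac{2z}{\pi\sqrt{s^2-z^2}}\int_{\frac{s-z}{2}}^{\frac{s+z}{2}}\frac{f_R(x)f_R(s-x)}{\sqrt{z^2-(2x-s)^2}}\,\mathrm{d}x$$ when $s>z$, and $f_{S_2,Z_2}(s,z)=0$ otherwise. *)

theory Defs
  imports "HOL-Probability.Probability"
begin

end

theory Submission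
  imports Defs
begin





lemma shift_pos:
  fixes F :: "real \<Rightarrow> ennreal"
  assumes [measurable]: "F \<in> borel_measurable borel"
    and per: "\<And>t. F (t + 2*pi) = F t" and c: "0 \<le> c" "c \<le> 2*pi"
  shows "(\<integral>\<^sup>+ t. F (t - c) * indicator {0..<2*pi} t \<partial>lborel)
       = (\<integral>\<^sup>+ t. F t * indicator {0..<2*pi} t \<partial>lborel)"
proof -
  have e1': "(\<integral>\<^sup>+ t. F (t - c) * indicator {0..<2*pi} t \<partial>lborel)
      = (\<integral>\<^sup>+ t. F t * indicator {-c..<2*pi-c} t \<partial>lborel)"
  proof -
    have "(\<integral>\<^sup>+ t. F t * indicator {-c..<2*pi-c} t \<partial>lborel)
      = (\<integral>\<^sup>+ t. F (-c + t) * indicator {-c..<2*pi-c} (-c + t) \<partial>lborel)"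
      using nn_integral_real_affine[of "\<lambda>t. F t * indicator {-c..<2*pi-c} t" 1 "-c"] by simp
    also have "\<dots> = (\<integral>\<^sup>+ t. F (t - c) * indicator {0..<2*pi} t \<partial>lborel)"
    proof (rule nn_integral_cong)
      fix t :: real
      have "-c + t = t - c" by simp
      then show "F (-c + t) * indicator {-c..<2*pi-c} (-c + t) = F (t - c) * indicator {0..<2*pi} t"
        by (simp add: indicator_def)
    qed
    finally show ?thesis by simp
  qed
  have e2: "(\<integral>\<^sup>+ t. F t * indicator {-c..<0} t \<partial>lborel)
      = (\<integral>\<^sup>+ t. F t * indicator {2*pi-c..<2*pi} t \<partial>lborel)"
  proof -
    have "(\<integral>\<^sup>+ t. F t * indicator {-c..<0} t \<partial>lborel)
      = (\<integral>\<^sup>+ t. F (-2*pi + t) * indicator {-c..<0} (-2*pi + t) \<partial>lborel)"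
      using nn_integral_real_affine[of "\<lambda>t. F t * indicator {-c..<0} t" 1 "-2*pi"] by simp
    also have "\<dots> = (\<integral>\<^sup>+ t. F t * indicator {2*pi-c..<2*pi} t \<partial>lborel)"
    proof (rule nn_integral_cong)
      fix t :: real
      have "F (-2*pi + t) = F t" using per[of "-2*pi + t"] by simp
      then show "F (-2*pi + t) * indicator {-c..<0} (-2*pi + t) = F t * indicator {2*pi-c..<2*pi} t"
        by (simp add: indicator_def)
    qed
    finally show ?thesis .
  qed
  have "(\<integral>\<^sup>+ t. F t * indicator {-c..<2*pi-c} t \<partial>lborel)
      = (\<integral>\<^sup>+ t. F t * indicator {-c..<0} t + F t * indicator {0..<2*pi-c} t \<partial>lborel)"
    using c by (intro nn_integral_cong) (auto simp: indicator_def)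
  also have "\<dots> = (\<integral>\<^sup>+ t. F t * indicator {-c..<0} t \<partial>lborel) + (\<integral>\<^sup>+ t. F t * indicator {0..<2*pi-c} t \<partial>lborel)"
    by (rule nn_integral_add; measurable)
  also have "\<dots> = (\<integral>\<^sup>+ t. F t * indicator {2*pi-c..<2*pi} t \<partial>lborel) + (\<integral>\<^sup>+ t. F t * indicator {0..<2*pi-c} t \<partial>lborel)"
    using e2 by simp
  also have "\<dots> = (\<integral>\<^sup>+ t. F t * indicator {2*pi-c..<2*pi} t + F t * indicator {0..<2*pi-c} t \<partial>lborel)"
    by (rule nn_integral_add[symmetric]; measurable)
  also have "\<dots> = (\<integral>\<^sup>+ t. F t * indicator {0..<2*pi} t \<partial>lborel)"
    using c by (intro nn_integral_cong) (auto simp: indicator_def)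
  finally show ?thesis using e1' by simp
qed

lemma shift_any:
  fixes F :: "real \<Rightarrow> ennreal"
  assumes [measurable]: "F \<in> borel_measurable borel"
    and per: "\<And>t. F (t + 2*pi) = F t" and c: "-2*pi \<le> c" "c \<le> 2*pi"
  shows "(\<integral>\<^sup>+ t. F (t - c) * indicator {0..<2*pi} t \<partial>lborel)
       = (\<integral>\<^sup>+ t. F t * indicator {0..<2*pi} t \<partial>lborel)"
proof (cases "0 \<le> c")
  case True then show ?thesis using shift_pos[OF assms(1) per, of c] c True by simp
next
  case False
  have "F (t - c) = F (t - (c + 2*pi))" for t using per[of "t - (c + 2*pi)"] by (simp add: algebra_simps)
  then have "(\<integral>\<^sup>+ t. F (t - c) * indicator {0..<2*pi} t \<partial>lborel) = (\<integral>\<^sup>+ t. F (t - (c + 2*pi)) * indicator {0..<2*pi} t \<partial>lborel)"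
    by simp
  also have "\<dots> = (\<integral>\<^sup>+ t. F t * indicator {0..<2*pi} t \<partial>lborel)"
    using False c by (intro shift_pos[OF assms(1) per]) auto
  finally show ?thesis .
qed

lemma split_pi:
  "(F::real\<Rightarrow>ennreal) t * indicator {0..<2*pi} t = F t * indicator {0..<pi} t + F t * indicator {pi..<2*pi} t"
    using pi_gt_zero by (cases "t < pi"; cases "0 \<le> t"; cases "t < 2*pi"; simp add: indicator_def)

lemma sym_half:
  fixes F :: "real \<Rightarrow> ennreal"
  assumes [measurable]: "F \<in> borel_measurable borel"
    and sy: "\<And>t. F (2*pi - t) = F t"
  shows "(\<integral>\<^sup>+ t. F t * indicator {0..<2*pi} t \<partial>lborel)
       = 2 * (\<integral>\<^sup>+ t. F t * indicator {0..pi} t \<partial>lborel)"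
proof -
  have a: "(\<integral>\<^sup>+ t. F t * indicator {pi..<2*pi} t \<partial>lborel)
      = (\<integral>\<^sup>+ t. F t * indicator {0<..pi} t \<partial>lborel)"
  proof -
    have "(\<integral>\<^sup>+ t. F t * indicator {pi..<2*pi} t \<partial>lborel)
      = (\<integral>\<^sup>+ t. F (2*pi + (-1) * t) * indicator {pi..<2*pi} (2*pi + (-1) * t) \<partial>lborel)"
      using nn_integral_real_affine[of "\<lambda>t. F t * indicator {pi..<2*pi} t" "-1" "2*pi"] by simp
    also have "\<dots> = (\<integral>\<^sup>+ t. F t * indicator {0<..pi} t \<partial>lborel)"
    proof (rule nn_integral_cong)
      fix t :: real
      show "F (2*pi + (-1) * t) * indicator {pi..<2*pi} (2*pi + (-1) * t) = F t * indicator {0<..pi} t"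
        using sy[of t] by (cases "0 < t \<and> t \<le> pi") (auto simp: indicator_def)
    qed
    finally show ?thesis .
  qed
  have b: "(\<integral>\<^sup>+ t. F t * indicator {0<..pi} t \<partial>lborel) = (\<integral>\<^sup>+ t. F t * indicator {0..pi} t \<partial>lborel)"
    by (rule nn_integral_cong_AE) (use AE_lborel_singleton[of 0] in \<open>eventually_elim, auto simp: indicator_def\<close>)
  have c: "(\<integral>\<^sup>+ t. F t * indicator {0..<pi} t \<partial>lborel) = (\<integral>\<^sup>+ t. F t * indicator {0..pi} t \<partial>lborel)"
    by (rule nn_integral_cong_AE) (use AE_lborel_singleton[of pi] in \<open>eventually_elim, auto simp: indicator_def\<close>)
  have "(\<integral>\<^sup>+ t. F t * indicator {0..<2*pi} t \<partial>lborel)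
      = (\<integral>\<^sup>+ t. F t * indicator {0..<pi} t + F t * indicator {pi..<2*pi} t \<partial>lborel)"
    by (rule nn_integral_cong) (rule split_pi)
  also have "\<dots> = (\<integral>\<^sup>+ t. F t * indicator {0..<pi} t \<partial>lborel) + (\<integral>\<^sup>+ t. F t * indicator {pi..<2*pi} t \<partial>lborel)"
    by (rule nn_integral_add; measurable)
  finally have d: "(\<integral>\<^sup>+ t. F t * indicator {0..<2*pi} t \<partial>lborel) = (\<integral>\<^sup>+ t. F t * indicator {0..<pi} t \<partial>lborel) + (\<integral>\<^sup>+ t. F t * indicator {pi..<2*pi} t \<partial>lborel)" .
  show ?thesis unfolding d a b c by (rule mult_2[symmetric])
qed



definition pp :: "real \<Rightarrow> real \<Rightarrow> real \<Rightarrow> real" where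
  "pp r1 r2 t = sqrt (r1\<^sup>2 + r2\<^sup>2 - 2*r1*r2*cos t)"
definition QQ :: "real \<Rightarrow> real \<Rightarrow> real \<Rightarrow> real" where
  "QQ r1 r2 z = 2*z / sqrt (((r1+r2)\<^sup>2 - z\<^sup>2) * (z\<^sup>2 - (r1-r2)\<^sup>2))"

lemma E_pos:
  fixes r1 r2 :: real assumes "r1 > 0" "r2 > 0" "r1 \<noteq> r2"
  shows "r1\<^sup>2 + r2\<^sup>2 - 2*r1*r2*cos t > 0"
proof -
  have "r1\<^sup>2 + r2\<^sup>2 - 2*r1*r2*cos t = (r1 - r2)\<^sup>2 + 2*r1*r2*(1 - cos t)"
    by (simp add: power2_eq_square algebra_simps)
  moreover have "(r1 - r2)\<^sup>2 > 0" using assms by simp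
  moreover have "2*r1*r2*(1 - cos t) \<ge> 0" using assms by (simp add: mult_nonneg_nonneg)
  ultimately show ?thesis by linarith
qed

lemma QQ_pp:
  fixes r1 r2 :: real assumes "r1 > 0" "r2 > 0" "r1 \<noteq> r2" and x: "0 < x" "x < pi"
  shows "QQ r1 r2 (pp r1 r2 x) * (r1 * r2 * sin x / pp r1 r2 x) = 1"
proof -
  define E where "E = r1\<^sup>2 + r2\<^sup>2 - 2*r1*r2*cos x"
  have Ep: "E > 0" unfolding E_def by (rule E_pos[OF assms(1-3)])
  have pp2: "(pp r1 r2 x)\<^sup>2 = E" unfolding pp_def E_def[symmetric] using Ep by simp
  have ppp: "pp r1 r2 x > 0" unfolding pp_def E_def[symmetric] using Ep by simp
  have sx: "sin x > 0" using x by (intro sin_gt_zero) auto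
  have "((r1+r2)\<^sup>2 - E) * (E - (r1-r2)\<^sup>2) = (2*r1 * r2 * sin x)\<^sup>2"
  proof -
    have "((r1+r2)\<^sup>2 - E) * (E - (r1-r2)\<^sup>2) = 4*r1\<^sup>2*r2\<^sup>2*(1 - (cos x)\<^sup>2)"
      unfolding E_def by (simp add: power2_eq_square algebra_simps)
    also have "1 - (cos x)\<^sup>2 = (sin x)\<^sup>2" by (simp add: sin_squared_eq)
    finally show ?thesis by (simp add: power2_eq_square algebra_simps)
  qed
  then have "sqrt (((r1+r2)\<^sup>2 - (pp r1 r2 x)\<^sup>2) * ((pp r1 r2 x)\<^sup>2 - (r1-r2)\<^sup>2)) = 2*r1 * r2 * sin x"
    using pp2 sx assms by simp
  then show ?thesis unfolding QQ_def using ppp sx assms by (simp add: field_simps)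
qed

lemma pp_deriv:
  fixes r1 r2 :: real assumes "r1 > 0" "r2 > 0" "r1 \<noteq> r2"
  shows "(pp r1 r2 has_real_derivative (r1 * r2 * sin x / pp r1 r2 x)) (at x)"
proof -
  define E where "E = r1\<^sup>2 + r2\<^sup>2 - 2*r1*r2*cos x"
  have Ep: "E > 0" unfolding E_def by (rule E_pos[OF assms(1-3)])
  have "((\<lambda>t. sqrt (r1\<^sup>2 + r2\<^sup>2 - 2*r1*r2*cos t)) has_real_derivative
          (inverse (sqrt E) / 2 * (2*r1 * r2 * sin x))) (at x)"
    unfolding E_def
    by (rule DERIV_chain2[OF DERIV_real_sqrt]) (use Ep[unfolded E_def] in \<open>auto intro!: derivative_eq_intros\<close>)
  moreover have "inverse (sqrt E) / 2 * (2*r1 * r2 * sin x) = r1 * r2 * sin x / pp r1 r2 x"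
    unfolding pp_def E_def[symmetric] by (simp add: field_simps)
  ultimately show ?thesis unfolding pp_def[abs_def] by simp
qed

lemma pp_cont:
  fixes r1 r2 :: real assumes "r1 > 0" "r2 > 0" "r1 \<noteq> r2"
  shows "continuous_on A (\<lambda>x. r1 * r2 * sin x / pp r1 r2 x)"
proof -
  have "pp r1 r2 x \<noteq> 0" for x unfolding pp_def using E_pos[OF assms, of x] by simp
  then show ?thesis unfolding pp_def by (intro continuous_intros) auto
qed

lemma pp_0: "r1 \<ge> 0 \<Longrightarrow> r2 \<ge> 0 \<Longrightarrow> pp r1 r2 0 = \<bar>r1 - r2\<bar>"
  unfolding pp_def by (simp add: power2_eq_square algebra_simps real_sqrt_abs[symmetric])
lemma pp_pi: "r1 \<ge> 0 \<Longrightarrow> r2 \<ge> 0 \<Longrightarrow> pp r1 r2 pi = r1 + r2"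
proof -
  assume "r1 \<ge> 0" "r2 \<ge> 0"
  have "r1\<^sup>2 + r2\<^sup>2 - 2*r1*r2*cos pi = (r1 + r2)\<^sup>2" by (simp add: power2_eq_square algebra_simps)
  then show ?thesis unfolding pp_def using \<open>r1 \<ge> 0\<close> \<open>r2 \<ge> 0\<close> by simp
qed

lemma subst_angle:
  fixes r1 r2 :: real and H :: "real \<Rightarrow> ennreal"
  assumes r: "r1 > 0" "r2 > 0" "r1 \<noteq> r2" and [measurable]: "H \<in> borel_measurable borel"
  shows "(\<integral>\<^sup>+ t. H (pp r1 r2 t) * indicator {0..pi} t \<partial>lborel)
       = (\<integral>\<^sup>+ z. H z * ennreal (QQ r1 r2 z) * indicator {\<bar>r1 - r2\<bar>..r1+r2} z \<partial>lborel)"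
proof -
  have [measurable]: "QQ r1 r2 \<in> borel_measurable borel" unfolding QQ_def[abs_def] by measurable
  have "(\<integral>\<^sup>+ z. H z * ennreal (QQ r1 r2 z) * indicator {pp r1 r2 0..pp r1 r2 pi} z \<partial>lborel)
     = (\<integral>\<^sup>+ x. H (pp r1 r2 x) * ennreal (QQ r1 r2 (pp r1 r2 x)) * ennreal (r1 * r2 * sin x / pp r1 r2 x) * indicator {0..pi} x \<partial>lborel)"
  proof (rule nn_integral_substitution_aux[where f="\<lambda>z. H z * ennreal (QQ r1 r2 z)"])
    show "(\<lambda>z. H z * ennreal (QQ r1 r2 z)) \<in> borel_measurable borel" by measurable
    show "\<And>x. 0 \<le> H x * ennreal (QQ r1 r2 x)" by simp
    show "\<And>x. x \<in> {0..pi} \<Longrightarrow> (pp r1 r2 has_real_derivative (r1 * r2 * sin x / pp r1 r2 x)) (at x)"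
      by (rule pp_deriv[OF r(1-3)])
    show "continuous_on {0..pi} (\<lambda>x. r1 * r2 * sin x / pp r1 r2 x)" by (rule pp_cont[OF r(1-3)])
    show "\<And>x. x \<in> {0..pi} \<Longrightarrow> 0 \<le> r1 * r2 * sin x / pp r1 r2 x"
    proof -
      fix x :: real assume "x \<in> {0..pi}"
      then have "sin x \<ge> 0" by (intro sin_ge_zero) auto
      then show "0 \<le> r1 * r2 * sin x / pp r1 r2 x" using r E_pos[OF r(1-3), of x] by (intro divide_nonneg_nonneg) (simp_all add: pp_def)
    qed
    show "0 < pi" by simp
  qed
  also have "\<dots> = (\<integral>\<^sup>+ x. H (pp r1 r2 x) * indicator {0..pi} x \<partial>lborel)"
  proof (rule nn_integral_cong_AE)
    show "AE x in lborel. H (pp r1 r2 x) * ennreal (QQ r1 r2 (pp r1 r2 x)) * ennreal (r1 * r2 * sin x / pp r1 r2 x) * indicator {0..pi} x = H (pp r1 r2 x) * indicator {0..pi} x"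
      using AE_lborel_singleton[of 0] AE_lborel_singleton[of pi]
    proof eventually_elim
      case (elim x)
      show ?case
      proof (cases "x \<in> {0..pi}")
        case True
        then have x: "0 < x" "x < pi" using elim by auto
        have "ennreal (QQ r1 r2 (pp r1 r2 x)) * ennreal (r1 * r2 * sin x / pp r1 r2 x) = 1"
        proof -
          have "sin x \<ge> 0" using x by (intro sin_ge_zero) auto
          then have "0 \<le> r1 * r2 * sin x / pp r1 r2 x"
            using r E_pos[OF r(1-3), of x] by (intro divide_nonneg_nonneg) (simp_all add: pp_def)
          then have "ennreal (QQ r1 r2 (pp r1 r2 x)) * ennreal (r1 * r2 * sin x / pp r1 r2 x)
              = ennreal (QQ r1 r2 (pp r1 r2 x) * (r1 * r2 * sin x / pp r1 r2 x))"
            by (rule ennreal_mult''[symmetric])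
          then show ?thesis using QQ_pp[OF r(1-3) x] by simp
        qed
        then show ?thesis by (simp add: mult.assoc)
      qed simp
    qed
  qed
  finally show ?thesis using pp_0[of r1 r2] pp_pi[of r1 r2] r by simp
qed


definition KK :: "real \<Rightarrow> real \<Rightarrow> real \<Rightarrow> real" where
  "KK r1 r2 z = indicator {\<bar>r1 - r2\<bar>..r1+r2} z * QQ r1 r2 z / pi"

lemma unif_int: "(\<integral>\<^sup>+ t. ennreal (indicator {0..<2*pi} t / (2*pi)) \<partial>lborel) = 1"
proof -
  have "(\<integral>\<^sup>+ t. ennreal (indicator {0..<2*pi} t / (2*pi)) \<partial>lborel)
      = (\<integral>\<^sup>+ t. ennreal (1/(2*pi)) * indicator {0..<2*pi} t \<partial>lborel)"
    by (intro nn_integral_cong) (simp add: indicator_def)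
  also have "\<dots> = ennreal (1/(2*pi)) * emeasure lborel {0..<2*pi}"
    by (rule nn_integral_cmult_indicator) simp
  also have "\<dots> = ennreal (1/(2*pi)) * ennreal (2*pi)" by simp
  also have "\<dots> = 1" by (subst ennreal_mult[symmetric]) auto
  finally show ?thesis .
qed

lemma sq_gen:
  fixes r1 r2 a b c d :: real
  shows "(r1*a + r2*b)\<^sup>2 + (r1*c+r2*d)\<^sup>2 = r1\<^sup>2*(c\<^sup>2+a\<^sup>2) + r2\<^sup>2*(d\<^sup>2+b\<^sup>2) + 2*r1*r2*(a*b + c*d)"
  by (simp add: power2_eq_square algebra_simps)

lemma sq_identity:
  fixes r1 r2 t1 t2 :: real
  shows "(r1 * cos t1 + r2 * cos t2)\<^sup>2 + (r1 * sin t1 + r2 * sin t2)\<^sup>2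
       = r1\<^sup>2 + r2\<^sup>2 - 2*r1*r2*cos (t1 - (t2 - pi))"
proof -
  have "cos (t1 - (t2 - pi)) = - cos (t1 - t2)"
    by (simp add: algebra_simps cos_diff cos_add)
  then have c: "cos (t1 - (t2 - pi)) = - (cos t1 * cos t2 + sin t1 * sin t2)" by (simp add: cos_diff)
  have l: "(r1 * cos t1 + r2 * cos t2)\<^sup>2 + (r1 * sin t1 + r2 * sin t2)\<^sup>2
      = r1\<^sup>2 * ((sin t1)\<^sup>2 + (cos t1)\<^sup>2) + r2\<^sup>2 * ((sin t2)\<^sup>2 + (cos t2)\<^sup>2) + 2*r1*r2*(cos t1 * cos t2 + sin t1 * sin t2)"
    using sq_gen[of r1 "cos t1" r2 "cos t2" "sin t1" "sin t2"] .
  show ?thesis unfolding c l sin_cos_squared_add by (simp add: algebra_simps)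
qed

lemma angular:
  fixes r1 r2 :: real and H :: "real \<Rightarrow> ennreal"
  assumes r: "r1 > 0" "r2 > 0" "r1 \<noteq> r2" and Hm[measurable]: "H \<in> borel_measurable borel"
  shows "(\<integral>\<^sup>+ tt. ennreal (indicator {0..<2*pi} (fst tt) / (2*pi)) * ennreal (indicator {0..<2*pi} (snd tt) / (2*pi))
            * H (sqrt ((r1 * cos (fst tt) + r2 * cos (snd tt))\<^sup>2 + (r1 * sin (fst tt) + r2 * sin (snd tt))\<^sup>2)) \<partial>(lborel \<Otimes>\<^sub>M lborel))
       = (\<integral>\<^sup>+ z. H z * ennreal (KK r1 r2 z) \<partial>lborel)"
proof -
  define u where "u t = indicator {0..<2*pi} t / (2*pi)" for t :: real
  define F where "F t = H (pp r1 r2 t)" for t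
  have Fm[measurable]: "F \<in> borel_measurable borel" unfolding F_def[abs_def] pp_def[abs_def] by measurable
  define I where "I = (\<integral>\<^sup>+ t. F t * indicator {0..<2*pi} t \<partial>lborel)"
  have "(\<integral>\<^sup>+ tt. ennreal (u (fst tt)) * ennreal (u (snd tt))
            * H (sqrt ((r1 * cos (fst tt) + r2 * cos (snd tt))\<^sup>2 + (r1 * sin (fst tt) + r2 * sin (snd tt))\<^sup>2)) \<partial>(lborel \<Otimes>\<^sub>M lborel))
      = (\<integral>\<^sup>+ t2. \<integral>\<^sup>+ t1. ennreal (u t1) * ennreal (u t2)
            * H (sqrt ((r1 * cos t1 + r2 * cos t2)\<^sup>2 + (r1 * sin t1 + r2 * sin t2)\<^sup>2)) \<partial>lborel \<partial>lborel)"
    by (subst lborel_pair.nn_integral_snd[symmetric]) (auto simp: u_def)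
  also have "\<dots> = (\<integral>\<^sup>+ t2. ennreal (u t2) * (ennreal (1/(2*pi)) * I) \<partial>lborel)"
  proof (rule nn_integral_cong)
    fix t2 :: real
    show "(\<integral>\<^sup>+ t1. ennreal (u t1) * ennreal (u t2)
            * H (sqrt ((r1 * cos t1 + r2 * cos t2)\<^sup>2 + (r1 * sin t1 + r2 * sin t2)\<^sup>2)) \<partial>lborel)
         = ennreal (u t2) * (ennreal (1/(2*pi)) * I)"
    proof (cases "t2 \<in> {0..<2*pi}")
      case False
      then show ?thesis by (simp add: u_def)
    next
      case True
      have "(\<integral>\<^sup>+ t1. ennreal (u t1) * ennreal (u t2)
            * H (sqrt ((r1 * cos t1 + r2 * cos t2)\<^sup>2 + (r1 * sin t1 + r2 * sin t2)\<^sup>2)) \<partial>lborel)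
          = (\<integral>\<^sup>+ t1. ennreal (u t2) * ennreal (1/(2*pi)) * (F (t1 - (t2 - pi)) * indicator {0..<2*pi} t1) \<partial>lborel)"
      proof (rule nn_integral_cong)
        fix t1 :: real
        have "ennreal (u t1) = ennreal (1/(2*pi)) * indicator {0..<2*pi} t1"
          by (simp add: u_def indicator_def)
        moreover have "H (sqrt ((r1 * cos t1 + r2 * cos t2)\<^sup>2 + (r1 * sin t1 + r2 * sin t2)\<^sup>2)) = F (t1 - (t2 - pi))"
          unfolding F_def pp_def sq_identity ..
        ultimately show "ennreal (u t1) * ennreal (u t2)
            * H (sqrt ((r1 * cos t1 + r2 * cos t2)\<^sup>2 + (r1 * sin t1 + r2 * sin t2)\<^sup>2))
            = ennreal (u t2) * ennreal (1/(2*pi)) * (F (t1 - (t2 - pi)) * indicator {0..<2*pi} t1)"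
          by (simp add: ac_simps)
      qed
      also have "\<dots> = ennreal (u t2) * ennreal (1/(2*pi)) * (\<integral>\<^sup>+ t1. F (t1 - (t2 - pi)) * indicator {0..<2*pi} t1 \<partial>lborel)"
        by (rule nn_integral_cmult) measurable
      also have "(\<integral>\<^sup>+ t1. F (t1 - (t2 - pi)) * indicator {0..<2*pi} t1 \<partial>lborel) = I"
        unfolding I_def
      proof (rule shift_any[OF Fm])
        show "\<And>t. F (t + 2*pi) = F t" unfolding F_def pp_def by simp
        show "-2*pi \<le> t2 - pi" "t2 - pi \<le> 2*pi" using True pi_gt_zero by auto
      qed
      finally show ?thesis by (simp add: ac_simps)
    qed
  qed
  also have "\<dots> = (\<integral>\<^sup>+ t2. ennreal (u t2) \<partial>lborel) * (ennreal (1/(2*pi)) * I)"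
    by (rule nn_integral_multc) (unfold u_def, measurable)
  also have "\<dots> = ennreal (1/(2*pi)) * I"
    using unif_int unfolding u_def by simp
  also have "I = 2 * (\<integral>\<^sup>+ t. F t * indicator {0..pi} t \<partial>lborel)"
    unfolding I_def
  proof (rule sym_half[OF Fm])
    fix t :: real show "F (2*pi - t) = F t" unfolding F_def pp_def by simp
  qed
  also have "(\<integral>\<^sup>+ t. F t * indicator {0..pi} t \<partial>lborel)
      = (\<integral>\<^sup>+ z. H z * ennreal (QQ r1 r2 z) * indicator {\<bar>r1 - r2\<bar>..r1+r2} z \<partial>lborel)"
    unfolding F_def by (rule subst_angle[OF r Hm])
  also have "ennreal (1/(2*pi)) * (2 * (\<integral>\<^sup>+ z. H z * ennreal (QQ r1 r2 z) * indicator {\<bar>r1 - r2\<bar>..r1+r2} z \<partial>lborel))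
      = ennreal (1/pi) * (\<integral>\<^sup>+ z. H z * ennreal (QQ r1 r2 z) * indicator {\<bar>r1 - r2\<bar>..r1+r2} z \<partial>lborel)"
  proof -
    have "ennreal (1/(2*pi)) * 2 = ennreal (1/(2*pi)) * ennreal 2" by simp
    also have "\<dots> = ennreal (1/pi)" by (subst ennreal_mult[symmetric]) auto
    finally show ?thesis by (simp add: mult.assoc[symmetric])
  qed
  also have "\<dots> = (\<integral>\<^sup>+ z. ennreal (1/pi) * (H z * ennreal (QQ r1 r2 z) * indicator {\<bar>r1 - r2\<bar>..r1+r2} z) \<partial>lborel)"
    by (rule nn_integral_cmult[symmetric]) (unfold QQ_def, measurable)
  also have "\<dots> = (\<integral>\<^sup>+ z. H z * ennreal (KK r1 r2 z) \<partial>lborel)"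
  proof (rule nn_integral_cong)
    fix z :: real
    show "ennreal (1/pi) * (H z * ennreal (QQ r1 r2 z) * indicator {\<bar>r1 - r2\<bar>..r1+r2} z) = H z * ennreal (KK r1 r2 z)"
    proof (cases "z \<in> {\<bar>r1 - r2\<bar>..r1+r2}")
      case True
      have "ennreal (1/pi) * ennreal (QQ r1 r2 z) = ennreal (1/pi * QQ r1 r2 z)"
        by (rule ennreal_mult'[symmetric]) simp
      then show ?thesis using True unfolding KK_def by (simp add: ac_simps)
    qed (simp add: KK_def)
  qed
  finally show ?thesis unfolding u_def .
qed


lemma QQ_shift: "QQ x (s - x) z = 2*z / sqrt ((s\<^sup>2 - z\<^sup>2) * (z\<^sup>2 - (2*x - s)\<^sup>2))"
proof -
  have "x + (s - x) = s" "x - (s - x) = 2*x - s" by simp_all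
  then show ?thesis unfolding QQ_def by simp
qed

lemma KK_shift: "KK x (s - x) z = indicator {\<bar>2*x - s\<bar>..s} z * (2*z / sqrt ((s\<^sup>2 - z\<^sup>2) * (z\<^sup>2 - (2*x - s)\<^sup>2))) / pi"
proof -
  have "x + (s - x) = s" "x - (s - x) = 2*x - s" by simp_all
  then show ?thesis unfolding KK_def QQ_shift by simp
qed

lemma key_pointwise:
  fixes fR :: "real \<Rightarrow> real" and s z :: real
  assumes fR0: "\<And>x. fR x \<ge> 0" and [measurable]: "fR \<in> borel_measurable borel"
  shows "(\<integral>\<^sup>+ x. ennreal (fR x) * ennreal (fR (s - x)) * ennreal (KK x (s - x) z) \<partial>lborel)
    = (if 0 \<le> z \<and> z < s then
        ennreal (2 * z / (pi * sqrt (s\<^sup>2 - z\<^sup>2))) *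
        (\<integral>\<^sup>+ x \<in> {(s - z) / 2 <..< (s + z) / 2}.
            ennreal (fR x * fR (s - x) / sqrt (z\<^sup>2 - (2 * x - s)\<^sup>2)) \<partial>lborel)
      else 0)"
proof (cases "0 \<le> z \<and> z < s")
  case True
  then have z: "0 \<le> z" "z < s" by auto
  define C where "C = 2 * z / (pi * sqrt (s\<^sup>2 - z\<^sup>2))"
  have A: "s\<^sup>2 - z\<^sup>2 > 0"
  proof -
    have "z\<^sup>2 < s\<^sup>2" using z by (intro power_strict_mono) auto
    then show ?thesis by simp
  qed
  have C0: "C \<ge> 0" unfolding C_def using z A by (intro divide_nonneg_nonneg) auto
  have pw: "ennreal (fR x) * ennreal (fR (s - x)) * ennreal (KK x (s - x) z)
      = ennreal C * (ennreal (fR x * fR (s - x) / sqrt (z\<^sup>2 - (2 * x - s)\<^sup>2)) * indicator {(s - z) / 2 <..< (s + z) / 2} x)" for x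
  proof -
    consider "\<bar>2*x - s\<bar> < z" | "\<bar>2*x - s\<bar> = z" | "\<bar>2*x - s\<bar> > z" by linarith
    then show ?thesis
    proof cases
      case 1
      then have xin: "x \<in> {(s - z) / 2 <..< (s + z) / 2}" by (auto simp: abs_less_iff)
      have zin: "z \<in> {\<bar>2*x - s\<bar>..s}" using 1 z by auto
      have B: "z\<^sup>2 - (2*x - s)\<^sup>2 > 0"
      proof -
        have "(2*x - s)\<^sup>2 = \<bar>2*x - s\<bar>\<^sup>2" by simp
        also have "\<dots> < z\<^sup>2" using 1 by (intro power_strict_mono) auto
        finally show ?thesis by simp
      qed
      have KKv: "KK x (s - x) z = 2*z / (sqrt (s\<^sup>2 - z\<^sup>2) * sqrt (z\<^sup>2 - (2*x - s)\<^sup>2)) / pi"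
        unfolding KK_shift using zin by (simp add: real_sqrt_mult)
      have KK0: "KK x (s - x) z \<ge> 0" unfolding KKv using z A B by simp
      have "ennreal (fR x) * ennreal (fR (s - x)) * ennreal (KK x (s - x) z)
          = ennreal (fR x * fR (s - x) * KK x (s - x) z)"
        using fR0[of x] fR0[of "s - x"] KK0 by (simp add: ennreal_mult mult_nonneg_nonneg)
      also have "fR x * fR (s - x) * KK x (s - x) z = C * (fR x * fR (s - x) / sqrt (z\<^sup>2 - (2 * x - s)\<^sup>2))"
        unfolding KKv C_def using A B by (simp add: field_simps)
      also have "ennreal (C * (fR x * fR (s - x) / sqrt (z\<^sup>2 - (2 * x - s)\<^sup>2)))
          = ennreal C * ennreal (fR x * fR (s - x) / sqrt (z\<^sup>2 - (2 * x - s)\<^sup>2))"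
        using C0 by (rule ennreal_mult')
      finally show ?thesis using xin by simp
    next
      case 2
      then have xnin: "x \<notin> {(s - z) / 2 <..< (s + z) / 2}" by (auto simp: abs_less_iff)
      have "(2*x - s)\<^sup>2 = z\<^sup>2" using 2 by (metis power2_abs)
      then have "KK x (s - x) z = 0" unfolding KK_shift by simp
      then show ?thesis using xnin by simp
    next
      case 3
      then have xnin: "x \<notin> {(s - z) / 2 <..< (s + z) / 2}" by (auto simp: abs_less_iff)
      have "z \<notin> {\<bar>2*x - s\<bar>..s}" using 3 by auto
      then have "KK x (s - x) z = 0" unfolding KK_shift by simp
      then show ?thesis using xnin by simp
    qed
  qed
  have "(\<integral>\<^sup>+ x. ennreal (fR x) * ennreal (fR (s - x)) * ennreal (KK x (s - x) z) \<partial>lborel)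
      = (\<integral>\<^sup>+ x. ennreal C * (ennreal (fR x * fR (s - x) / sqrt (z\<^sup>2 - (2 * x - s)\<^sup>2)) * indicator {(s - z) / 2 <..< (s + z) / 2} x) \<partial>lborel)"
    using pw by simp
  also have "\<dots> = ennreal C * (\<integral>\<^sup>+ x. ennreal (fR x * fR (s - x) / sqrt (z\<^sup>2 - (2 * x - s)\<^sup>2)) * indicator {(s - z) / 2 <..< (s + z) / 2} x \<partial>lborel)"
    by (rule nn_integral_cmult) measurable
  finally show ?thesis using True unfolding C_def by simp
next
  case False
  have "KK x (s - x) z = 0" for x
  proof (cases "z \<in> {\<bar>2*x - s\<bar>..s}")
    case True
    then have "z = s" using False by auto
    then show ?thesis unfolding KK_shift by simp
  next
    case False
    then show ?thesis unfolding KK_shift by simp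
  qed
  then have "(\<integral>\<^sup>+ x. ennreal (fR x) * ennreal (fR (s - x)) * ennreal (KK x (s - x) z) \<partial>lborel) = 0" by simp
  then show ?thesis by (simp only: if_not_P[OF False])
qed


definition fd :: "(real \<Rightarrow> real) \<Rightarrow> real \<times> real \<Rightarrow> ennreal" where
  "fd fR = (\<lambda>(s, z). if 0 \<le> z \<and> z < s then
        ennreal (2 * z / (pi * sqrt (s\<^sup>2 - z\<^sup>2))) *
        (\<integral>\<^sup>+ x \<in> {(s - z) / 2 <..< (s + z) / 2}.
            ennreal (fR x * fR (s - x) / sqrt (z\<^sup>2 - (2 * x - s)\<^sup>2)) \<partial>lborel)
      else 0)"

lemma fd_alt:
  assumes "\<And>x. fR x \<ge> 0" "fR \<in> borel_measurable borel"
  shows "fd fR = (\<lambda>sz. \<integral>\<^sup>+ x. ennreal (fR x) * ennreal (fR (fst sz - x)) * ennreal (KK x (fst sz - x) (snd sz)) \<partial>lborel)"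
  unfolding fd_def by (auto simp: fun_eq_iff key_pointwise[OF assms])

lemma sfN: "sigma_finite_measure (lborel \<Otimes>\<^sub>M lborel :: (real \<times> real) measure)"
  by (rule sigma_finite_pair_measure[OF lborel.sigma_finite_measure_axioms lborel.sigma_finite_measure_axioms])

lemma main_chain:
  fixes fR :: "real \<Rightarrow> real" and h :: "real \<times> real \<Rightarrow> ennreal"
  assumes fR0: "\<And>x. fR x \<ge> 0" and fRm[measurable]: "fR \<in> borel_measurable borel"
    and hm[measurable]: "h \<in> borel_measurable borel"
    and AEf: "AE x in lborel. fR x \<noteq> 0 \<longrightarrow> x > 0"
  shows "(\<integral>\<^sup>+ y. ennreal (fR (fst (fst y))) * ennreal (fR (snd (fst y))) *
       (ennreal (indicator {0..<2*pi} (fst (snd y)) / (2*pi)) * ennreal (indicator {0..<2*pi} (snd (snd y)) / (2*pi)))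
     * h (fst (fst y) + snd (fst y), sqrt ((fst (fst y) * cos (fst (snd y)) + snd (fst y) * cos (snd (snd y)))\<^sup>2
          + (fst (fst y) * sin (fst (snd y)) + snd (fst y) * sin (snd (snd y)))\<^sup>2))
     \<partial>((lborel \<Otimes>\<^sub>M lborel) \<Otimes>\<^sub>M (lborel \<Otimes>\<^sub>M lborel)))
   = (\<integral>\<^sup>+ sz. fd fR sz * h sz \<partial>(lborel \<Otimes>\<^sub>M lborel))"
proof -
  define Ig where "Ig y = ennreal (fR (fst (fst y))) * ennreal (fR (snd (fst y))) *
       (ennreal (indicator {0..<2*pi} (fst (snd y)) / (2*pi)) * ennreal (indicator {0..<2*pi} (snd (snd y)) / (2*pi)))
     * h (fst (fst y) + snd (fst y), sqrt ((fst (fst y) * cos (fst (snd y)) + snd (fst y) * cos (snd (snd y)))\<^sup>2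
          + (fst (fst y) * sin (fst (snd y)) + snd (fst y) * sin (snd (snd y)))\<^sup>2))" for y :: "(real \<times> real) \<times> (real \<times> real)"
  define Ang where "Ang r1 r2 = (\<integral>\<^sup>+ tt. ennreal (indicator {0..<2*pi} (fst tt) / (2*pi)) * ennreal (indicator {0..<2*pi} (snd tt) / (2*pi))
            * h (r1 + r2, sqrt ((r1 * cos (fst tt) + r2 * cos (snd tt))\<^sup>2 + (r1 * sin (fst tt) + r2 * sin (snd tt))\<^sup>2)) \<partial>(lborel \<Otimes>\<^sub>M lborel))" for r1 r2
  define J where "J r1 r2 = (\<integral>\<^sup>+ z. h (r1 + r2, z) * ennreal (KK r1 r2 z) \<partial>lborel)" for r1 r2
  define \<Phi> where "\<Phi> r1 s z = ennreal (fR r1) * ennreal (fR (s - r1)) * ennreal (KK r1 (s - r1) z) * h (s, z)" for r1 s z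
  have KKm'[measurable]: "(\<lambda>x. KK (f x) (g x) (k x)) \<in> borel_measurable M"
    if [measurable]: "f \<in> borel_measurable M" "g \<in> borel_measurable M" "k \<in> borel_measurable M" for f g k and M :: "'b measure"
    unfolding KK_def QQ_def indicator_def atLeastAtMost_iff by measurable
  have Igm[measurable]: "Ig \<in> borel_measurable ((lborel \<Otimes>\<^sub>M lborel) \<Otimes>\<^sub>M (lborel \<Otimes>\<^sub>M lborel))"
    unfolding Ig_def[abs_def] by measurable
  have "(\<integral>\<^sup>+ y. Ig y \<partial>((lborel \<Otimes>\<^sub>M lborel) \<Otimes>\<^sub>M (lborel \<Otimes>\<^sub>M lborel)))
      = (\<integral>\<^sup>+ rr. \<integral>\<^sup>+ tt. Ig (rr, tt) \<partial>(lborel \<Otimes>\<^sub>M lborel) \<partial>(lborel \<Otimes>\<^sub>M lborel))"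
    by (rule sigma_finite_measure.nn_integral_fst[OF sfN Igm, symmetric])
  also have "\<dots> = (\<integral>\<^sup>+ rr. ennreal (fR (fst rr)) * ennreal (fR (snd rr)) * Ang (fst rr) (snd rr) \<partial>(lborel \<Otimes>\<^sub>M lborel))"
  proof (rule nn_integral_cong)
    fix rr :: "real \<times> real"
    show "(\<integral>\<^sup>+ tt. Ig (rr, tt) \<partial>(lborel \<Otimes>\<^sub>M lborel)) = ennreal (fR (fst rr)) * ennreal (fR (snd rr)) * Ang (fst rr) (snd rr)"
      unfolding Ig_def Ang_def
      by (subst nn_integral_cmult[symmetric]) (measurable, simp add: mult.assoc)
  qed
  also have "\<dots> = (\<integral>\<^sup>+ rr. ennreal (fR (fst rr)) * ennreal (fR (snd rr)) * J (fst rr) (snd rr) \<partial>(lborel \<Otimes>\<^sub>M lborel))"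
  proof (rule nn_integral_cong_AE)
    have "AE rr in lborel \<Otimes>\<^sub>M lborel. (fR (fst rr) \<noteq> 0 \<longrightarrow> fst rr > 0) \<and> (fR (snd rr) \<noteq> 0 \<longrightarrow> snd rr > 0) \<and> fst rr \<noteq> snd rr"
    proof (rule lborel_pair.AE_pair_measure)
      show "{x \<in> space (lborel \<Otimes>\<^sub>M lborel). (fR (fst x) \<noteq> 0 \<longrightarrow> fst x > 0) \<and> (fR (snd x) \<noteq> 0 \<longrightarrow> snd x > 0) \<and> fst x \<noteq> snd x} \<in> sets (lborel \<Otimes>\<^sub>M lborel)"
        by measurable
      show "AE x in lborel. AE y in lborel. (fR (fst (x, y)) \<noteq> 0 \<longrightarrow> fst (x, y) > 0) \<and> (fR (snd (x, y)) \<noteq> 0 \<longrightarrow> snd (x, y) > 0) \<and> fst (x, y) \<noteq> snd (x, y)"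
        using AEf
      proof eventually_elim
        case (elim x)
        show ?case using AEf AE_lborel_singleton[of x]
          by eventually_elim (use elim in auto)
      qed
    qed
    then show "AE rr in lborel \<Otimes>\<^sub>M lborel. ennreal (fR (fst rr)) * ennreal (fR (snd rr)) * Ang (fst rr) (snd rr)
        = ennreal (fR (fst rr)) * ennreal (fR (snd rr)) * J (fst rr) (snd rr)"
    proof eventually_elim
      case (elim rr)
      show ?case
      proof (cases "fR (fst rr) = 0 \<or> fR (snd rr) = 0")
        case True then show ?thesis by auto
      next
        case False
        then have r: "fst rr > 0" "snd rr > 0" "fst rr \<noteq> snd rr" using elim by auto
        have "Ang (fst rr) (snd rr) = J (fst rr) (snd rr)"
          unfolding Ang_def J_def
          by (rule angular[OF r, where H = "\<lambda>z. h (fst rr + snd rr, z)"]) measurable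
        then show ?thesis by simp
      qed
    qed
  qed
  also have "\<dots> = (\<integral>\<^sup>+ r1. \<integral>\<^sup>+ r2. ennreal (fR r1) * ennreal (fR r2) * J r1 r2 \<partial>lborel \<partial>lborel)"
  proof -
    have Jm[measurable]: "(\<lambda>rr. J (fst rr) (snd rr)) \<in> borel_measurable (lborel \<Otimes>\<^sub>M lborel)"
      unfolding J_def by measurable
    have "(\<lambda>rr. ennreal (fR (fst rr)) * ennreal (fR (snd rr)) * J (fst rr) (snd rr)) \<in> borel_measurable (lborel \<Otimes>\<^sub>M lborel)"
      by measurable
    from lborel.nn_integral_fst[OF this] show ?thesis by simp
  qed
  also have "\<dots> = (\<integral>\<^sup>+ r1. \<integral>\<^sup>+ s. \<integral>\<^sup>+ z. \<Phi> r1 s z \<partial>lborel \<partial>lborel \<partial>lborel)"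
  proof (rule nn_integral_cong)
    fix r1 :: real
    have "(\<integral>\<^sup>+ r2. ennreal (fR r1) * ennreal (fR r2) * J r1 r2 \<partial>lborel)
        = (\<integral>\<^sup>+ s. ennreal (fR r1) * ennreal (fR (-r1 + 1 * s)) * J r1 (-r1 + 1 * s) \<partial>lborel)"
      using nn_integral_real_affine[of "\<lambda>r2. ennreal (fR r1) * ennreal (fR r2) * J r1 r2" 1 "-r1"]
      unfolding J_def by simp
    also have "\<dots> = (\<integral>\<^sup>+ s. \<integral>\<^sup>+ z. \<Phi> r1 s z \<partial>lborel \<partial>lborel)"
    proof (rule nn_integral_cong)
      fix s :: real
      have e: "-r1 + 1 * s = s - r1" "r1 + (s - r1) = s" by simp_all
      show "ennreal (fR r1) * ennreal (fR (-r1 + 1 * s)) * J r1 (-r1 + 1 * s) = (\<integral>\<^sup>+ z. \<Phi> r1 s z \<partial>lborel)"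
        unfolding e(1) J_def e(2) \<Phi>_def
        by (subst nn_integral_cmult[symmetric]) (measurable, simp add: ac_simps)
    qed
    finally show "(\<integral>\<^sup>+ r2. ennreal (fR r1) * ennreal (fR r2) * J r1 r2 \<partial>lborel) = (\<integral>\<^sup>+ s. \<integral>\<^sup>+ z. \<Phi> r1 s z \<partial>lborel \<partial>lborel)" .
  qed
  also have "\<dots> = (\<integral>\<^sup>+ s. \<integral>\<^sup>+ r1. \<integral>\<^sup>+ z. \<Phi> r1 s z \<partial>lborel \<partial>lborel \<partial>lborel)"
    by (rule lborel_pair.Fubini'[symmetric]) (unfold \<Phi>_def, measurable)
  also have "\<dots> = (\<integral>\<^sup>+ s. \<integral>\<^sup>+ z. \<integral>\<^sup>+ r1. \<Phi> r1 s z \<partial>lborel \<partial>lborel \<partial>lborel)"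
    by (rule nn_integral_cong, rule lborel_pair.Fubini'[symmetric]) (unfold \<Phi>_def, measurable)
  also have "\<dots> = (\<integral>\<^sup>+ s. \<integral>\<^sup>+ z. fd fR (s, z) * h (s, z) \<partial>lborel \<partial>lborel)"
  proof (intro nn_integral_cong)
    fix s z :: real
    have "(\<integral>\<^sup>+ r1. \<Phi> r1 s z \<partial>lborel) = (\<integral>\<^sup>+ r1. ennreal (fR r1) * ennreal (fR (s - r1)) * ennreal (KK r1 (s - r1) z) \<partial>lborel) * h (s, z)"
      unfolding \<Phi>_def by (rule nn_integral_multc) measurable
    also have "\<dots> = fd fR (s, z) * h (s, z)"
      unfolding fd_alt[OF fR0 fRm] by simp
    finally show "(\<integral>\<^sup>+ r1. \<Phi> r1 s z \<partial>lborel) = fd fR (s, z) * h (s, z)" .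
  qed
  also have "\<dots> = (\<integral>\<^sup>+ sz. fd fR sz * h sz \<partial>(lborel \<Otimes>\<^sub>M lborel))"
  proof -
    have "sets (lborel \<Otimes>\<^sub>M lborel) = sets (borel \<Otimes>\<^sub>M borel :: (real \<times> real) measure)"
      by (rule sets_pair_measure_cong) simp_all
    then have "sets (lborel \<Otimes>\<^sub>M lborel) = sets (borel :: (real \<times> real) measure)" unfolding borel_prod .
    then have hm'[measurable]: "h \<in> borel_measurable (lborel \<Otimes>\<^sub>M lborel)"
      by (subst measurable_cong_sets[OF _ refl]) (assumption, rule hm)
    have "(\<lambda>sz. fd fR sz * h sz) \<in> borel_measurable (lborel \<Otimes>\<^sub>M lborel)"
      unfolding fd_alt[OF fR0 fRm] by measurable
    from lborel.nn_integral_fst[OF this] show ?thesis by simp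
  qed
  finally show ?thesis unfolding Ig_def .
qed

theorem corollary3:
  fixes M :: "'a measure"
    and R1 R2 \<Theta>1 \<Theta>2 :: "'a \<Rightarrow> real"
    and fR :: "real \<Rightarrow> real"
  assumes "prob_space M"
    and "prob_space.indep_vars M (\<lambda>_. borel) (\<lambda>i. [R1, R2, \<Theta>1, \<Theta>2] ! i) {0..<4}"
    and "\<And>x. fR x \<ge> 0"
    and "distributed M lborel R1 (\<lambda>x. ennreal (fR x))"
    and "distributed M lborel R2 (\<lambda>x. ennreal (fR x))"
    and "AE \<omega> in M. R1 \<omega> \<ge> 0"
    and "AE \<omega> in M. R2 \<omega> \<ge> 0"
    and "distributed M lborel \<Theta>1 (\<lambda>x. ennreal (indicator {0..<2*pi} x / (2*pi)))"
    and "distributed M lborel \<Theta>2 (\<lambda>x. ennreal (indicator {0..<2*pi} x / (2*pi)))"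
  shows "distributed M (lborel \<Otimes>\<^sub>M lborel)
     (\<lambda>\<omega>. (R1 \<omega> + R2 \<omega>,
            sqrt ((R1 \<omega> * cos (\<Theta>1 \<omega>) + R2 \<omega> * cos (\<Theta>2 \<omega>))\<^sup>2
                + (R1 \<omega> * sin (\<Theta>1 \<omega>) + R2 \<omega> * sin (\<Theta>2 \<omega>))\<^sup>2)))
     (\<lambda>(s, z). if 0 \<le> z \<and> z < s then
        ennreal (2 * z / (pi * sqrt (s\<^sup>2 - z\<^sup>2))) *
        (\<integral>\<^sup>+ x \<in> {(s - z) / 2 <..< (s + z) / 2}.
            ennreal (fR x * fR (s - x) / sqrt (z\<^sup>2 - (2 * x - s)\<^sup>2)) \<partial>lborel)
      else 0)"
proof -
  interpret prob_space M by fact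
  note D1 = assms(4) and D2 = assms(5) and D3 = assms(8) and D4 = assms(9)
  have [measurable]: "R1 \<in> borel_measurable M" "R2 \<in> borel_measurable M"
    "\<Theta>1 \<in> borel_measurable M" "\<Theta>2 \<in> borel_measurable M"
    using distributed_measurable[OF D1] distributed_measurable[OF D2]
      distributed_measurable[OF D3] distributed_measurable[OF D4] by simp_all
  have fRm[measurable]: "fR \<in> borel_measurable borel"
  proof -
    have [measurable]: "(\<lambda>x. ennreal (fR x)) \<in> borel_measurable borel"
      using distributed_borel_measurable[OF D1] by simp
    have "(\<lambda>x. enn2real (ennreal (fR x))) \<in> borel_measurable borel" by measurable
    then show ?thesis using assms(3) by simp
  qed
  have sfl: "sigma_finite_measure lborel" by (rule lborel.sigma_finite_measure_axioms)
  define V where "V = (\<lambda>i. [R1, R2, \<Theta>1, \<Theta>2] ! i)"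
  have ind: "indep_vars (\<lambda>_. borel) V {0..<4}" using assms(2) unfolding V_def .
  have iR: "indep_var lborel R1 lborel R2"
  proof -
    have "indep_var (PiM {0} (\<lambda>_. borel)) (\<lambda>\<omega>. restrict (\<lambda>i. V i \<omega>) {0}) (PiM {1} (\<lambda>_. borel)) (\<lambda>\<omega>. restrict (\<lambda>i. V i \<omega>) {1})"
      by (rule indep_var_restrict[OF ind]) auto
    then have "indep_var lborel ((\<lambda>f. f 0) \<circ> (\<lambda>\<omega>. restrict (\<lambda>i. V i \<omega>) {0})) lborel ((\<lambda>f. f 1) \<circ> (\<lambda>\<omega>. restrict (\<lambda>i. V i \<omega>) {1}))"
      by (rule indep_var_compose) measurable
    moreover have "((\<lambda>f. f 0) \<circ> (\<lambda>\<omega>. restrict (\<lambda>i. V i \<omega>) {0})) = R1"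
      "((\<lambda>f. f 1) \<circ> (\<lambda>\<omega>. restrict (\<lambda>i. V i \<omega>) {1})) = R2" by (auto simp: V_def fun_eq_iff)
    ultimately show ?thesis by simp
  qed
  have iT: "indep_var lborel \<Theta>1 lborel \<Theta>2"
  proof -
    have "indep_var (PiM {2} (\<lambda>_. borel)) (\<lambda>\<omega>. restrict (\<lambda>i. V i \<omega>) {2}) (PiM {3} (\<lambda>_. borel)) (\<lambda>\<omega>. restrict (\<lambda>i. V i \<omega>) {3})"
      by (rule indep_var_restrict[OF ind]) auto
    then have "indep_var lborel ((\<lambda>f. f 2) \<circ> (\<lambda>\<omega>. restrict (\<lambda>i. V i \<omega>) {2})) lborel ((\<lambda>f. f 3) \<circ> (\<lambda>\<omega>. restrict (\<lambda>i. V i \<omega>) {3}))"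
      by (rule indep_var_compose) measurable
    moreover have "((\<lambda>f. f 2) \<circ> (\<lambda>\<omega>. restrict (\<lambda>i. V i \<omega>) {2})) = \<Theta>1"
      "((\<lambda>f. f 3) \<circ> (\<lambda>\<omega>. restrict (\<lambda>i. V i \<omega>) {3})) = \<Theta>2" by (auto simp: V_def fun_eq_iff numeral_eq_Suc)
    ultimately show ?thesis by simp
  qed
  have i1: "indep_var (lborel \<Otimes>\<^sub>M lborel) (\<lambda>\<omega>. (R1 \<omega>, R2 \<omega>)) (lborel \<Otimes>\<^sub>M lborel) (\<lambda>\<omega>. (\<Theta>1 \<omega>, \<Theta>2 \<omega>))"
  proof -
    have "indep_var (PiM {0,1} (\<lambda>_. borel)) (\<lambda>\<omega>. restrict (\<lambda>i. V i \<omega>) {0,1}) (PiM {2,3} (\<lambda>_. borel)) (\<lambda>\<omega>. restrict (\<lambda>i. V i \<omega>) {2,3})"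
      by (rule indep_var_restrict[OF ind]) auto
    then have "indep_var (lborel \<Otimes>\<^sub>M lborel) ((\<lambda>f. (f 0, f 1)) \<circ> (\<lambda>\<omega>. restrict (\<lambda>i. V i \<omega>) {0,1}))
        (lborel \<Otimes>\<^sub>M lborel) ((\<lambda>f. (f 2, f 3)) \<circ> (\<lambda>\<omega>. restrict (\<lambda>i. V i \<omega>) {2,3}))"
      by (rule indep_var_compose) measurable
    moreover have "((\<lambda>f. (f 0, f 1)) \<circ> (\<lambda>\<omega>. restrict (\<lambda>i. V i \<omega>) {0,1})) = (\<lambda>\<omega>. (R1 \<omega>, R2 \<omega>))"
      "((\<lambda>f. (f 2, f 3)) \<circ> (\<lambda>\<omega>. restrict (\<lambda>i. V i \<omega>) {2,3})) = (\<lambda>\<omega>. (\<Theta>1 \<omega>, \<Theta>2 \<omega>))"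
      by (auto simp: V_def fun_eq_iff numeral_eq_Suc)
    ultimately show ?thesis by simp
  qed
  have DR: "distributed M (lborel \<Otimes>\<^sub>M lborel) (\<lambda>\<omega>. (R1 \<omega>, R2 \<omega>)) (\<lambda>(x, y). ennreal (fR x) * ennreal (fR y))"
    by (rule distributed_joint_indep[OF sfl sfl D1 D2 iR])
  have DT: "distributed M (lborel \<Otimes>\<^sub>M lborel) (\<lambda>\<omega>. (\<Theta>1 \<omega>, \<Theta>2 \<omega>))
      (\<lambda>(x, y). ennreal (indicator {0..<2*pi} x / (2*pi)) * ennreal (indicator {0..<2*pi} y / (2*pi)))"
    by (rule distributed_joint_indep[OF sfl sfl D3 D4 iT])
  have DJ: "distributed M ((lborel \<Otimes>\<^sub>M lborel) \<Otimes>\<^sub>M (lborel \<Otimes>\<^sub>M lborel)) (\<lambda>\<omega>. ((R1 \<omega>, R2 \<omega>), (\<Theta>1 \<omega>, \<Theta>2 \<omega>)))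
      (\<lambda>(x, y). (\<lambda>(x, y). ennreal (fR x) * ennreal (fR y)) x *
         (\<lambda>(x, y). ennreal (indicator {0..<2*pi} x / (2*pi)) * ennreal (indicator {0..<2*pi} y / (2*pi))) y)"
    by (rule distributed_joint_indep[OF sfN sfN DR DT i1])
  have AEf: "AE x in lborel. fR x \<noteq> 0 \<longrightarrow> x > 0"
  proof -
    have "AE x in lborel. 0 < ennreal (fR x) \<longrightarrow> x \<noteq> 0"
      using AE_lborel_singleton[of 0] by eventually_elim auto
    then have "AE \<omega> in M. R1 \<omega> \<noteq> 0"
      by (subst distributed_AE2[OF D1]) auto
    then have "AE \<omega> in M. R1 \<omega> > 0" using assms(6) by eventually_elim auto
    then have "AE x in lborel. 0 < ennreal (fR x) \<longrightarrow> x > 0"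
      by (subst (asm) distributed_AE2[OF D1]) auto
    then show ?thesis
    proof eventually_elim
      case (elim x)
      show ?case
      proof
        assume "fR x \<noteq> 0"
        then have "fR x > 0" using assms(3)[of x] by simp
        then have "0 < ennreal (fR x)" by simp
        then show "x > 0" using elim by simp
      qed
    qed
  qed
  define X where "X \<omega> = (R1 \<omega> + R2 \<omega>,
            sqrt ((R1 \<omega> * cos (\<Theta>1 \<omega>) + R2 \<omega> * cos (\<Theta>2 \<omega>))\<^sup>2
                + (R1 \<omega> * sin (\<Theta>1 \<omega>) + R2 \<omega> * sin (\<Theta>2 \<omega>))\<^sup>2))" for \<omega>
  have Xm[measurable]: "X \<in> measurable M (lborel \<Otimes>\<^sub>M lborel)" unfolding X_def by measurable
  have fdm[measurable]: "fd fR \<in> borel_measurable (lborel \<Otimes>\<^sub>M lborel)"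
  proof -
    have KKm'[measurable]: "(\<lambda>x. KK (f x) (g x) (k x)) \<in> borel_measurable N"
      if [measurable]: "f \<in> borel_measurable N" "g \<in> borel_measurable N" "k \<in> borel_measurable N" for f g k and N :: "'b measure"
      unfolding KK_def QQ_def indicator_def atLeastAtMost_iff by measurable
    show ?thesis unfolding fd_alt[OF assms(3) fRm] by measurable
  qed
  have setsN: "sets (lborel \<Otimes>\<^sub>M lborel) = sets (borel :: (real \<times> real) measure)"
  proof -
    have "sets (lborel \<Otimes>\<^sub>M lborel) = sets (borel \<Otimes>\<^sub>M borel :: (real \<times> real) measure)"
      by (rule sets_pair_measure_cong) simp_all
    then show ?thesis unfolding borel_prod .
  qed
  have "distributed M (lborel \<Otimes>\<^sub>M lborel) X (fd fR)"
    unfolding distributed_def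
  proof (intro conjI Xm fdm)
    show "distr M (lborel \<Otimes>\<^sub>M lborel) X = density (lborel \<Otimes>\<^sub>M lborel) (fd fR)"
    proof (rule measure_eqI)
      show "sets (distr M (lborel \<Otimes>\<^sub>M lborel) X) = sets (density (lborel \<Otimes>\<^sub>M lborel) (fd fR))" by simp
    next
      fix A assume "A \<in> sets (distr M (lborel \<Otimes>\<^sub>M lborel) X)"
      then have A: "A \<in> sets (lborel \<Otimes>\<^sub>M lborel)" by simp
      then have Ab: "A \<in> sets (borel :: (real \<times> real) measure)" using setsN by simp
      have hm: "indicator A \<in> (borel_measurable borel :: (real \<times> real \<Rightarrow> ennreal) set)"
        using Ab by simp
      have "emeasure (distr M (lborel \<Otimes>\<^sub>M lborel) X) A = emeasure M (X -` A \<inter> space M)"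
        using A by (rule emeasure_distr[OF Xm])
      also have "\<dots> = (\<integral>\<^sup>+ \<omega>. indicator A (X \<omega>) \<partial>M)"
      proof -
        have "X -` A \<inter> space M \<in> sets M" by (rule measurable_sets[OF Xm A])
        then have "emeasure M (X -` A \<inter> space M) = (\<integral>\<^sup>+ \<omega>. indicator (X -` A \<inter> space M) \<omega> \<partial>M)"
          by simp
        also have "\<dots> = (\<integral>\<^sup>+ \<omega>. indicator A (X \<omega>) \<partial>M)"
          by (rule nn_integral_cong) (auto simp: indicator_def)
        finally show ?thesis .
      qed
      also have "\<dots> = (\<integral>\<^sup>+ y. (\<lambda>(x, y). (\<lambda>(x, y). ennreal (fR x) * ennreal (fR y)) x *
         (\<lambda>(x, y). ennreal (indicator {0..<2*pi} x / (2*pi)) * ennreal (indicator {0..<2*pi} y / (2*pi))) y) y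
         * indicator A (fst (fst y) + snd (fst y), sqrt ((fst (fst y) * cos (fst (snd y)) + snd (fst y) * cos (snd (snd y)))\<^sup>2
          + (fst (fst y) * sin (fst (snd y)) + snd (fst y) * sin (snd (snd y)))\<^sup>2)) \<partial>((lborel \<Otimes>\<^sub>M lborel) \<Otimes>\<^sub>M (lborel \<Otimes>\<^sub>M lborel)))"
      proof -
        have "(\<lambda>y. indicator A (fst (fst y) + snd (fst y), sqrt ((fst (fst y) * cos (fst (snd y)) + snd (fst y) * cos (snd (snd y)))\<^sup>2
          + (fst (fst y) * sin (fst (snd y)) + snd (fst y) * sin (snd (snd y)))\<^sup>2)) :: ennreal)
          \<in> borel_measurable ((lborel \<Otimes>\<^sub>M lborel) \<Otimes>\<^sub>M (lborel \<Otimes>\<^sub>M lborel))"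
          using hm by measurable
        from distributed_nn_integral[OF DJ this] show ?thesis by (simp add: X_def)
      qed
      also have "\<dots> = (\<integral>\<^sup>+ y. ennreal (fR (fst (fst y))) * ennreal (fR (snd (fst y))) *
       (ennreal (indicator {0..<2*pi} (fst (snd y)) / (2*pi)) * ennreal (indicator {0..<2*pi} (snd (snd y)) / (2*pi)))
     * indicator A (fst (fst y) + snd (fst y), sqrt ((fst (fst y) * cos (fst (snd y)) + snd (fst y) * cos (snd (snd y)))\<^sup>2
          + (fst (fst y) * sin (fst (snd y)) + snd (fst y) * sin (snd (snd y)))\<^sup>2))
     \<partial>((lborel \<Otimes>\<^sub>M lborel) \<Otimes>\<^sub>M (lborel \<Otimes>\<^sub>M lborel)))"
        by (rule nn_integral_cong) (simp add: case_prod_beta)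
      also have "\<dots> = (\<integral>\<^sup>+ sz. fd fR sz * indicator A sz \<partial>(lborel \<Otimes>\<^sub>M lborel))"
        by (rule main_chain[OF assms(3) fRm hm AEf])
      also have "\<dots> = emeasure (density (lborel \<Otimes>\<^sub>M lborel) (fd fR)) A"
        using A by (rule emeasure_density[OF fdm, symmetric])
      finally show "emeasure (distr M (lborel \<Otimes>\<^sub>M lborel) X) A = emeasure (density (lborel \<Otimes>\<^sub>M lborel) (fd fR)) A" .
    qed
  qed
  then show ?thesis unfolding X_def fd_def .
qed

end
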